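(* For the iterates of SONATA with step-size $\alpha\in(0,1]$ under Assumptions (A), (B), (C), (W), for every agent $i$ and every $\nu\ge0$: $$U(x_i^{\nu+1/2})\le U(x_i^\nu)-\alpha\Big(\big(1-\tfrac\alpha2\big)\tilde\mu_i+\tfrac\alpha2D_i^\ell\Big)\|d_i^\nu\|^2+\alpha\|d_i^\nu\|\,\|\delta_i^\nu\|.$$
   Context: Problem (P): minimize $U=F+G$ over $\mathcal K$, $F=\frac1m\sum_{i=1}^mf_i$. (A): $\mathcal K\subseteq\mathbb R^d$ nonempty closed convex; $f_i$ twice differentiable convex on open $\mathcal O\supseteq\mathcal K$; $\mu I\preceq\nabla^2F\preceq LI$ on $\mathcal K$ ($\mu>0$, $L<\infty$); $G$ convex on $\mathcal K$. (B): connected undirected graph on $\{1,\dots,m\}$, edges $\mathcal E$. (W): $w_{ii}>0$; for $i\ne j$, $w_{ij}>0$ iff $(i,j)\in\mathcal E$, else 0; $W$ doubly stochastic. (C): $\tilde f_i:\mathcal O\times\mathcal O\to\mathbb R$ $C^2$, $\nabla\tilde f_i(x;x)=\nabla f_i(x)$, $\nabla\tilde f_i(\cdot;x)$ $\tilde L_i$-Lipschitz, $\tilde f_i(\cdot;x)$ $\tilde\mu_i$-strongly convex on $\mathcal K$ for all $x\in\mathcal K$ (first-argument derivatives); constants $D_i^\ell\le D_i^u$ with $D_i^\ell I\preceq\nabla^2\tilde f_i(x;y)-\nabla^2F(x)\preceq D_i^uI$ on $\mathcal K\times\mathcal K$. SONATA: $x_i^0\in\mathcal K$, $y_i^0=\nabla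 f_i(x_i^0)$; $\hat x_i^\nu=\arg\min_{x_i\in\mathcal K}\tilde f_i(x_i;x_i^\nu)+(y_i^\nu-\nabla f_i(x_i^\nu))^\top(x_i-x_i^\nu)+G(x_i)$; $d_i^\nu=\hat x_i^\nu-x_i^\nu$; $x_i^{\nu+1/2}=x_i^\nu+\alpha d_i^\nu$; $x_i^{\nu+1}=\sum_jw_{ij}x_j^{\nu+1/2}$; $y_i^{\nu+1}=\sum_jw_{ij}(y_j^\nu+\nabla f_j(x_j^{\nu+1})-\nabla f_j(x_j^\nu))$. Tracking error $\delta_i^\nu=\nabla F(x_i^\nu)-y_i^\nu$. *)

theory Defs
  imports "HOL-Analysis.Analysis"
begin

definition C2_on :: "'b::euclidean_space set \<Rightarrow> ('b \<Rightarrow> real) \<Rightarrow> bool" where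
  "C2_on S g \<longleftrightarrow> (\<exists>(Dg::'b \<Rightarrow> 'b) (H::'b \<Rightarrow> 'b \<Rightarrow>\<^sub>L 'b).
     (\<forall>x\<in>S. (g has_derivative (\<lambda>h. Dg x \<bullet> h)) (at x) \<and>
             (Dg has_derivative blinfun_apply (H x)) (at x)) \<and> continuous_on S H)"

definition strongly_convex_on :: "'a::real_normed_vector set \<Rightarrow> real \<Rightarrow> ('a \<Rightarrow> real) \<Rightarrow> bool" where
  "strongly_convex_on S c f \<longleftrightarrow> convex S \<and>
    (\<forall>x\<in>S. \<forall>y\<in>S. \<forall>u. 0 \<le> u \<and> u \<le> 1 \<longrightarrow>
       f (u *\<^sub>R x + (1 - u) *\<^sub>R y) \<le> u * f x + (1 - u) * f y - c / 2 * u * (1 - u) * (norm (x - y))\<^sup>2)"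

definition connected_undirected_graph :: "nat \<Rightarrow> (nat \<times> nat) set \<Rightarrow> bool" where
  "connected_undirected_graph m E \<longleftrightarrow>
     E \<subseteq> {(i,j). i < m \<and> j < m \<and> i \<noteq> j} \<and> sym E \<and>
     (\<forall>i<m. \<forall>j<m. (i,j) \<in> E\<^sup>*)"

end

theory Submission
  imports Defs
begin

lemma line_deriv:
  fixes g :: "'a::real_normed_vector \<Rightarrow> 'b::real_normed_vector"
  assumes "(g has_derivative g') (at (x + t *\<^sub>R d))"
  shows "((\<lambda>s. g (x + s *\<^sub>R d)) has_derivative (\<lambda>s. g' (s *\<^sub>R d))) (at t)"
proof -
  have "((\<lambda>s. x + s *\<^sub>R d) has_derivative (\<lambda>s. s *\<^sub>R d)) (at t)"
    by (auto intro!: derivative_eq_intros)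
  from has_derivative_compose[OF this assms] show ?thesis by simp
qed

lemma line_deriv_real:
  fixes g :: "'a::real_inner \<Rightarrow> real"
  assumes "(g has_derivative (\<lambda>h. D \<bullet> h)) (at (x + t *\<^sub>R d))"
  shows "((\<lambda>s. g (x + s *\<^sub>R d)) has_real_derivative (D \<bullet> d)) (at t)"
proof -
  have "((\<lambda>s. g (x + s *\<^sub>R d)) has_derivative (\<lambda>s. D \<bullet> (s *\<^sub>R d))) (at t)"
    using line_deriv[OF assms] .
  moreover have "(\<lambda>s. D \<bullet> (s *\<^sub>R d)) = (*) (D \<bullet> d)" by (auto simp: mult.commute)
  ultimately show ?thesis by (simp add: has_field_derivative_def)
qed

lemma line_deriv_inner:
  fixes g :: "'a::real_inner \<Rightarrow> 'a"
  assumes "(g has_derivative g') (at (x + t *\<^sub>R d))"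
  shows "((\<lambda>s. g (x + s *\<^sub>R d) \<bullet> d) has_real_derivative (g' d \<bullet> d)) (at t)"
proof -
  have lin: "linear g'" using assms has_derivative_linear by blast
  have "((\<lambda>s. g (x + s *\<^sub>R d) \<bullet> d) has_derivative (\<lambda>s. g' (s *\<^sub>R d) \<bullet> d)) (at t)"
    using line_deriv[OF assms] by (auto intro!: derivative_eq_intros)
  moreover have "(\<lambda>s. g' (s *\<^sub>R d) \<bullet> d) = (*) (g' d \<bullet> d)"
    using lin by (auto simp: linear_cmul mult.commute)
  ultimately show ?thesis by (simp add: has_field_derivative_def)
qed

lemma small_limit:
  fixes A B c :: real
  assumes "c \<ge> 0" and "\<And>u. 0 < u \<Longrightarrow> u \<le> 1 \<Longrightarrow> A \<le> B - c * (1 - u)"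
  shows "A \<le> B - c"
proof (rule ccontr)
  assume "\<not> ?thesis"
  then have e: "A - B + c > 0" by simp
  show False
  proof (cases "c = 0")
    case True with assms(2)[of 1] e show False by simp
  next
    case False
    then have cp: "c > 0" using assms(1) by simp
    define u where "u = min 1 ((A - B + c) / (2 * c))"
    have u0: "0 < u" using e cp by (simp add: u_def)
    have u1: "u \<le> 1" by (simp add: u_def)
    have "c * u \<le> c * ((A - B + c) / (2 * c))" using cp by (intro mult_left_mono) (auto simp: u_def)
    also have "\<dots> = (A - B + c) / 2" using cp by simp
    finally have "c * u < A - B + c" using e by simp
    with assms(2)[OF u0 u1] show False by (simp add: algebra_simps)
  qed
qed

lemma final_arith: fixes Fa C F0 B A S Lt a mu Dl N Ga G0 Gh nn :: real
assumes "Fa - C - a*(S+Lt) + a^2/2*(Dl*N) \<le> F0 - B"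
"C \<le> a*A + (1-a)*B - mu/2*a*(1-a)*N"
"Ga \<le> (1-a)*G0 + a*Gh"
"a*(A+Lt+Gh) \<le> a*(B+G0-mu/2*N)"
"a*S \<le> a*nn"
shows "Fa + Ga \<le> F0 + G0 - a*((1-a/2)*mu + a/2*Dl)*N + a*nn"
proof -
  have e: "a*((1-a/2)*mu + a/2*Dl)*N = a*mu/2*N + mu/2*a*(1-a)*N + a^2/2*(Dl*N)"
    by (simp add: field_simps power2_eq_square)
  have e2: "a*(A+Lt+Gh) = a*A + a*Lt+a*Gh" "a*(B+G0-mu/2*N) = a*B+a*G0 - a*mu/2*N"
     "a*(S+Lt) = a*S+a*Lt" "(1-a)*B = B - a*B" "(1-a)*G0 = G0 - a*G0"
    by (simp_all add: algebra_simps)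
  show ?thesis using assms unfolding e e2 by linarith
qed

theorem lemma3p1:
  fixes m :: nat
    and K Ob :: "'a::euclidean_space set"
    and f :: "nat \<Rightarrow> 'a \<Rightarrow> real" and gf :: "nat \<Rightarrow> 'a \<Rightarrow> 'a" and Hf :: "nat \<Rightarrow> 'a \<Rightarrow> 'a \<Rightarrow> 'a"
    and G :: "'a \<Rightarrow> real" and \<mu> L :: real
    and E :: "(nat \<times> nat) set" and W :: "nat \<Rightarrow> nat \<Rightarrow> real"
    and ft :: "nat \<Rightarrow> 'a \<Rightarrow> 'a \<Rightarrow> real" and gft :: "nat \<Rightarrow> 'a \<Rightarrow> 'a \<Rightarrow> 'a"
    and Hft :: "nat \<Rightarrow> 'a \<Rightarrow> 'a \<Rightarrow> 'a \<Rightarrow> 'a"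
    and Lt \<mu>t Dl Du :: "nat \<Rightarrow> real"
    and \<alpha> :: real
    and x y xhat xhalf :: "nat \<Rightarrow> nat \<Rightarrow> 'a"
    and F U :: "'a \<Rightarrow> real" and gF :: "'a \<Rightarrow> 'a" and HF :: "'a \<Rightarrow> 'a \<Rightarrow> 'a"
  assumes m_pos: "m \<ge> 1"
    \<comment> \<open>(A)\<close>
    and K_nonempty: "K \<noteq> {}" and K_closed: "closed K" and K_convex: "convex K"
    and O_open: "open Ob" and K_sub_O: "K \<subseteq> Ob"
    and f_grad: "\<And>i z. i < m \<Longrightarrow> z \<in> Ob \<Longrightarrow> (f i has_derivative (\<lambda>h. gf i z \<bullet> h)) (at z)"
    and f_hess: "\<And>i z. i < m \<Longrightarrow> z \<in> Ob \<Longrightarrow> (gf i has_derivative Hf i z) (at z)"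
    and f_convex: "\<And>i. i < m \<Longrightarrow> convex_on K (f i)"
    and F_def: "\<And>z. F z = (1 / real m) * (\<Sum>i<m. f i z)"
    and gF_def: "\<And>z. gF z = (1 / real m) *\<^sub>R (\<Sum>i<m. gf i z)"
    and HF_def: "\<And>z h. HF z h = (1 / real m) *\<^sub>R (\<Sum>i<m. Hf i z h)"
    and mu_pos: "\<mu> > 0"
    and F_hess_bounds: "\<And>z h. z \<in> K \<Longrightarrow>
          \<mu> * (norm h)\<^sup>2 \<le> h \<bullet> HF z h \<and> h \<bullet> HF z h \<le> L * (norm h)\<^sup>2"
    and G_convex: "convex_on K G"
    and U_def: "\<And>z. U z = F z + G z"
    \<comment> \<open>(B)\<close>
    and graph: "connected_undirected_graph m E"
    \<comment> \<open>(W)\<close>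
    and W_diag: "\<And>i. i < m \<Longrightarrow> W i i > 0"
    and W_offdiag: "\<And>i j. i < m \<Longrightarrow> j < m \<Longrightarrow> i \<noteq> j \<Longrightarrow>
          (W i j > 0 \<longleftrightarrow> (i, j) \<in> E) \<and> ((i, j) \<notin> E \<longrightarrow> W i j = 0)"
    and W_row: "\<And>i. i < m \<Longrightarrow> (\<Sum>j<m. W i j) = 1"
    and W_col: "\<And>j. j < m \<Longrightarrow> (\<Sum>i<m. W i j) = 1"
    \<comment> \<open>(C)\<close>
    and ft_C2: "\<And>i. i < m \<Longrightarrow> C2_on (Ob \<times> Ob) (\<lambda>p. ft i (fst p) (snd p))"
    and ft_grad: "\<And>i z w. i < m \<Longrightarrow> z \<in> Ob \<Longrightarrow> w \<in> Ob \<Longrightarrow>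
          ((\<lambda>v. ft i v w) has_derivative (\<lambda>h. gft i z w \<bullet> h)) (at z)"
    and ft_hess: "\<And>i z w. i < m \<Longrightarrow> z \<in> Ob \<Longrightarrow> w \<in> Ob \<Longrightarrow>
          ((\<lambda>v. gft i v w) has_derivative Hft i z w) (at z)"
    and ft_consistent: "\<And>i z. i < m \<Longrightarrow> z \<in> Ob \<Longrightarrow> gft i z z = gf i z"
    and ft_lipschitz: "\<And>i w. i < m \<Longrightarrow> w \<in> K \<Longrightarrow> (Lt i)-lipschitz_on K (\<lambda>v. gft i v w)"
    and mut_pos: "\<And>i. i < m \<Longrightarrow> \<mu>t i > 0"
    and ft_strongly_convex: "\<And>i w. i < m \<Longrightarrow> w \<in> K \<Longrightarrow> strongly_convex_on K (\<mu>t i) (\<lambda>v. ft i v w)"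
    and D_le: "\<And>i. i < m \<Longrightarrow> Dl i \<le> Du i"
    and ft_hess_bounds: "\<And>i z w h. i < m \<Longrightarrow> z \<in> K \<Longrightarrow> w \<in> K \<Longrightarrow>
          Dl i * (norm h)\<^sup>2 \<le> h \<bullet> (Hft i z w h - HF z h) \<and>
          h \<bullet> (Hft i z w h - HF z h) \<le> Du i * (norm h)\<^sup>2"
    \<comment> \<open>SONATA\<close>
    and step: "0 < \<alpha>" "\<alpha> \<le> 1"
    and x0: "\<And>i. i < m \<Longrightarrow> x 0 i \<in> K"
    and y0: "\<And>i. i < m \<Longrightarrow> y 0 i = gf i (x 0 i)"
    and xhat_in: "\<And>\<nu> i. i < m \<Longrightarrow> xhat \<nu> i \<in> K"
    and xhat_min: "\<And>\<nu> i z. i < m \<Longrightarrow> z \<in> K \<Longrightarrow>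
          ft i (xhat \<nu> i) (x \<nu> i) + (y \<nu> i - gf i (x \<nu> i)) \<bullet> (xhat \<nu> i - x \<nu> i) + G (xhat \<nu> i)
          \<le> ft i z (x \<nu> i) + (y \<nu> i - gf i (x \<nu> i)) \<bullet> (z - x \<nu> i) + G z"
    and xhalf_def: "\<And>\<nu> i. i < m \<Longrightarrow> xhalf \<nu> i = x \<nu> i + \<alpha> *\<^sub>R (xhat \<nu> i - x \<nu> i)"
    and x_next: "\<And>\<nu> i. i < m \<Longrightarrow> x (Suc \<nu>) i = (\<Sum>j<m. W i j *\<^sub>R xhalf \<nu> j)"
    and y_next: "\<And>\<nu> i. i < m \<Longrightarrow> y (Suc \<nu>) i =
          (\<Sum>j<m. W i j *\<^sub>R (y \<nu> j + gf j (x (Suc \<nu>) j) - gf j (x \<nu> j)))"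
  shows "\<forall>i<m. \<forall>\<nu>.
     U (xhalf \<nu> i) \<le> U (x \<nu> i)
       - \<alpha> * ((1 - \<alpha> / 2) * \<mu>t i + \<alpha> / 2 * Dl i) * (norm (xhat \<nu> i - x \<nu> i))\<^sup>2
       + \<alpha> * norm (xhat \<nu> i - x \<nu> i) * norm (gF (x \<nu> i) - y \<nu> i)"
proof (intro allI impI)
  fix i \<nu> assume im: "i < m"
  have Wnn: "\<And>i j. i < m \<Longrightarrow> j < m \<Longrightarrow> W i j \<ge> 0"
  proof -
    fix i j assume "i < m" "j < m"
    then show "W i j \<ge> 0"
      using W_diag[of i] W_offdiag[of i j] by (cases "i = j"; cases "(i,j) \<in> E") auto
  qed
  have xK: "\<forall>j<m. x n j \<in> K" for n
  proof (induction n)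
    case 0 then show ?case using x0 by blast
  next
    case (Suc n)
    have hK: "xhalf n j \<in> K" if "j < m" for j
    proof -
      have "xhalf n j = (1 - \<alpha>) *\<^sub>R x n j + \<alpha> *\<^sub>R xhat n j"
        using xhalf_def[OF that] by (simp add: algebra_simps)
      then show ?thesis using convexD[OF K_convex, of "x n j" "xhat n j" "1 - \<alpha>" \<alpha>]
        Suc that xhat_in[OF that] step by auto
    qed
    show ?case
    proof (intro allI impI)
      fix j assume jm: "j < m"
      show "x (Suc n) j \<in> K"
        unfolding x_next[OF jm]
        by (rule convex_sum) (use K_convex W_row[OF jm] Wnn[OF jm] hK in auto)
    qed
  qed
  define x0 where "x0 = x \<nu> i"
  define xh where "xh = xhat \<nu> i"
  define d where "d = xh - x0"
  define N where "N = (norm d)\<^sup>2"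
  have x0K: "x0 \<in> K" using xK im x0_def by blast
  have xhK: "xh \<in> K" using xhat_in im xh_def by blast
  have lineK: "x0 + t *\<^sub>R d \<in> K" if "0 \<le> t" "t \<le> 1" for t
  proof -
    have "x0 + t *\<^sub>R d = (1 - t) *\<^sub>R x0 + t *\<^sub>R xh" by (simp add: d_def algebra_simps)
    then show ?thesis using convexD[OF K_convex x0K xhK, of "1 - t" t] that by auto
  qed
  have F_eq: "F = (\<lambda>z. (1 / real m) * (\<Sum>j<m. f j z))" using F_def by auto
  have gF_eq: "gF = (\<lambda>z. (1 / real m) *\<^sub>R (\<Sum>j<m. gf j z))" using gF_def by auto
  have F_der: "(F has_derivative (\<lambda>h. gF z \<bullet> h)) (at z)" if "z \<in> Ob" for z
  proof -
    have "((\<lambda>z. (1 / real m) * (\<Sum>j<m. f j z)) has_derivative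
        (\<lambda>h. (1 / real m) * (\<Sum>j<m. gf j z \<bullet> h))) (at z)"
      by (rule has_derivative_mult_right, rule has_derivative_sum) (use f_grad that in auto)
    moreover have "(\<lambda>h. (1 / real m) * (\<Sum>j<m. gf j z \<bullet> h)) = (\<lambda>h. gF z \<bullet> h)"
      by (auto simp: gF_def inner_sum_left)
    ultimately show ?thesis by (simp add: F_eq)
  qed
  have gF_der: "(gF has_derivative HF z) (at z)" if "z \<in> Ob" for z
  proof -
    have "((\<lambda>z. (1 / real m) *\<^sub>R (\<Sum>j<m. gf j z)) has_derivative
        (\<lambda>h. (1 / real m) *\<^sub>R (\<Sum>j<m. Hf j z h))) (at z)"
      by (rule has_derivative_scaleR_right, rule has_derivative_sum) (use f_hess that in auto)
    moreover have "(\<lambda>h. (1 / real m) *\<^sub>R (\<Sum>j<m. Hf j z h)) = HF z"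
      by (auto simp: HF_def)
    ultimately show ?thesis by (simp add: gF_eq)
  qed
  define \<psi> where "\<psi> t = F (x0 + t *\<^sub>R d) - ft i (x0 + t *\<^sub>R d) x0" for t
  define \<psi>' where "\<psi>' t = (gF (x0 + t *\<^sub>R d) - gft i (x0 + t *\<^sub>R d) x0) \<bullet> d" for t
  define \<psi>'' where "\<psi>'' t = (HF (x0 + t *\<^sub>R d) d - Hft i (x0 + t *\<^sub>R d) x0 d) \<bullet> d" for t
  have x0O: "x0 \<in> Ob" using x0K K_sub_O by blast
  have d1: "(\<psi> has_real_derivative \<psi>' t) (at t)" if "0 \<le> t" "t \<le> 1" for t
  proof -
    have zO: "x0 + t *\<^sub>R d \<in> Ob" using lineK[OF that] K_sub_O by blast
    have a: "((\<lambda>s. F (x0 + s *\<^sub>R d)) has_real_derivative (gF (x0 + t *\<^sub>R d) \<bullet> d)) (at t)"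
      by (rule line_deriv_real[OF F_der[OF zO]])
    have b: "((\<lambda>s. ft i (x0 + s *\<^sub>R d) x0) has_real_derivative (gft i (x0 + t *\<^sub>R d) x0 \<bullet> d)) (at t)"
      by (rule line_deriv_real[OF ft_grad[OF im zO x0O]])
    have "(\<psi> has_real_derivative (gF (x0 + t *\<^sub>R d) \<bullet> d - gft i (x0 + t *\<^sub>R d) x0 \<bullet> d)) (at t)"
      unfolding \<psi>_def[abs_def] by (rule DERIV_diff[OF a b])
    then show ?thesis by (simp add: \<psi>'_def inner_diff_left)
  qed
  have d2: "(\<psi>' has_real_derivative \<psi>'' t) (at t)" if "0 \<le> t" "t \<le> 1" for t
  proof -
    have zO: "x0 + t *\<^sub>R d \<in> Ob" using lineK[OF that] K_sub_O by blast
    have a: "((\<lambda>s. gF (x0 + s *\<^sub>R d) \<bullet> d) has_real_derivative (HF (x0 + t *\<^sub>R d) d \<bullet> d)) (at t)"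
      by (rule line_deriv_inner[OF gF_der[OF zO]])
    have b: "((\<lambda>s. gft i (x0 + s *\<^sub>R d) x0 \<bullet> d) has_real_derivative (Hft i (x0 + t *\<^sub>R d) x0 d \<bullet> d)) (at t)"
      by (rule line_deriv_inner[OF ft_hess[OF im zO x0O]])
    have "(\<psi>' has_real_derivative (HF (x0 + t *\<^sub>R d) d \<bullet> d - Hft i (x0 + t *\<^sub>R d) x0 d \<bullet> d)) (at t)"
      unfolding \<psi>'_def[abs_def] inner_diff_left by (rule DERIV_diff[OF a b])
    then show ?thesis by (simp add: \<psi>''_def inner_diff_left)
  qed
  have bnd2: "\<psi>'' t \<le> - Dl i * N" if "0 \<le> t" "t \<le> 1" for t
    using ft_hess_bounds[OF im lineK[OF that] x0K, of d]
    by (simp add: \<psi>''_def N_def inner_diff_left inner_diff_right inner_commute)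
  have k1: "\<psi>' t + t * (Dl i * N) \<le> \<psi>' 0" if "0 \<le> t" "t \<le> 1" for t
  proof -
    have "(\<lambda>s. \<psi>' s + s * (Dl i * N)) t \<le> (\<lambda>s. \<psi>' s + s * (Dl i * N)) 0"
    proof (rule DERIV_nonpos_imp_nonincreasing[OF that(1)])
      fix s assume "0 \<le> s" "s \<le> t"
      then have s: "0 \<le> s" "s \<le> 1" using that by auto
      show "\<exists>y. ((\<lambda>s. \<psi>' s + s * (Dl i * N)) has_real_derivative y) (at s) \<and> y \<le> 0"
        by (rule exI[of _ "\<psi>'' s + Dl i * N"])
           (use bnd2[OF s] in \<open>auto intro!: derivative_eq_intros d2[OF s]\<close>)
    qed
    then show ?thesis by simp
  qed
  have k2: "\<psi> \<alpha> - \<alpha> * \<psi>' 0 + \<alpha>\<^sup>2 / 2 * (Dl i * N) \<le> \<psi> 0"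
  proof -
    have "(\<lambda>s. \<psi> s - s * \<psi>' 0 + s\<^sup>2 / 2 * (Dl i * N)) \<alpha> \<le> (\<lambda>s. \<psi> s - s * \<psi>' 0 + s\<^sup>2 / 2 * (Dl i * N)) 0"
    proof (rule DERIV_nonpos_imp_nonincreasing[where f="\<lambda>s. \<psi> s - s * \<psi>' 0 + s\<^sup>2 / 2 * (Dl i * N)"])
      show "0 \<le> \<alpha>" using step by simp
      fix s assume "0 \<le> s" "s \<le> \<alpha>"
      then have s: "0 \<le> s" "s \<le> 1" using step by auto
      show "\<exists>y. ((\<lambda>s. \<psi> s - s * \<psi>' 0 + s\<^sup>2 / 2 * (Dl i * N)) has_real_derivative y) (at s) \<and> y \<le> 0"
        by (rule exI[of _ "\<psi>' s - \<psi>' 0 + s * (Dl i * N)"])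
           (use k1[OF s] in \<open>auto intro!: derivative_eq_intros d1[OF s]\<close>)
    qed
    then show ?thesis by simp
  qed
  define lin where "lin = y \<nu> i - gf i x0"
  define A where "A = ft i xh x0"
  define B where "B = ft i x0 x0"
  define Gh where "Gh = G xh"
  define G0 where "G0 = G x0"
  define Lt where "Lt = lin \<bullet> d"
  have N0: "N \<ge> 0" by (simp add: N_def)
  have mu: "\<mu>t i > 0" using mut_pos im by simp
  have sc: "strongly_convex_on K (\<mu>t i) (\<lambda>v. ft i v x0)" using ft_strongly_convex[OF im x0K] .
  have SC: "\<And>a b u. a \<in> K \<Longrightarrow> b \<in> K \<Longrightarrow> 0 \<le> u \<Longrightarrow> u \<le> 1 \<Longrightarrow>
     ft i (u *\<^sub>R a + (1 - u) *\<^sub>R b) x0 \<le> u * ft i a x0 + (1 - u) * ft i b x0 - \<mu>t i / 2 * u * (1 - u) * (norm (a - b))\<^sup>2"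
    using sc unfolding strongly_convex_on_def by blast
  have nd: "norm (xh - x0) = norm d" "norm (x0 - xh) = norm d" by (simp_all add: d_def norm_minus_commute)
  have opt: "A + Lt + Gh \<le> B + G0 - (\<mu>t i / 2 * N)"
  proof (rule small_limit)
    show "0 \<le> \<mu>t i / 2 * N" using mu N0 by simp
    fix u :: real assume u: "0 < u" "u \<le> 1"
    define z where "z = u *\<^sub>R x0 + (1 - u) *\<^sub>R xh"
    have zK: "z \<in> K" using convexD[OF K_convex x0K xhK, of u "1 - u"] u by (simp add: z_def)
    have m1: "A + Lt + Gh \<le> ft i z x0 + lin \<bullet> (z - x0) + G z"
      using xhat_min[OF im zK, of \<nu>] by (simp add: A_def Lt_def Gh_def lin_def x0_def xh_def d_def)
    have zx: "z - x0 = (1 - u) *\<^sub>R d" by (simp add: z_def d_def algebra_simps)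
    have m2: "ft i z x0 \<le> u * B + (1 - u) * A - \<mu>t i / 2 * u * (1 - u) * N"
      using SC[OF x0K xhK, of u] u by (simp add: z_def A_def B_def N_def nd)
    have m3: "G z \<le> u * G0 + (1 - u) * Gh"
      using convex_onD[OF G_convex, of "1 - u" x0 xh] u x0K xhK by (simp add: z_def G0_def Gh_def)
    have "A + Lt + Gh \<le> u * B + (1 - u) * A - \<mu>t i / 2 * u * (1 - u) * N + (1 - u) * Lt + u * G0 + (1 - u) * Gh"
      using m1 m2 m3 by (simp add: zx Lt_def)
    then have "u * (A + Lt + Gh) \<le> u * (B + G0 - \<mu>t i / 2 * N * (1 - u))"
      by (simp add: algebra_simps)
    then show "A + Lt + Gh \<le> B + G0 - \<mu>t i / 2 * N * (1 - u)"
      using u by simp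
  qed
  have xa: "xhalf \<nu> i = x0 + \<alpha> *\<^sub>R d" using xhalf_def[OF im] by (simp add: x0_def xh_def d_def)
  have xa2: "x0 + \<alpha> *\<^sub>R d = \<alpha> *\<^sub>R xh + (1 - \<alpha>) *\<^sub>R x0" by (simp add: d_def algebra_simps)
  have xa3: "x0 + \<alpha> *\<^sub>R d = (1 - \<alpha>) *\<^sub>R x0 + \<alpha> *\<^sub>R xh" by (simp add: d_def algebra_simps)
  have c6: "ft i (x0 + \<alpha> *\<^sub>R d) x0 \<le> \<alpha> * A + (1 - \<alpha>) * B - \<mu>t i / 2 * \<alpha> * (1 - \<alpha>) * N"
    using SC[OF xhK x0K, of \<alpha>] step unfolding xa2 by (simp add: A_def B_def N_def nd)
  have c7: "G (x0 + \<alpha> *\<^sub>R d) \<le> (1 - \<alpha>) * G0 + \<alpha> * Gh"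
    using convex_onD[OF G_convex, of \<alpha> x0 xh] step x0K xhK unfolding xa3 by (simp add: G0_def Gh_def)
  define S where "S = (gF x0 - y \<nu> i) \<bullet> d"
  have P0: "\<psi>' 0 = S + Lt"
    using ft_consistent[OF im x0O] by (simp add: \<psi>'_def S_def Lt_def lin_def inner_diff_left)
  have CS: "S \<le> norm d * norm (gF x0 - y \<nu> i)" unfolding S_def using norm_cauchy_schwarz[of "gF x0 - y \<nu> i" d] by (simp add: mult.commute)
  have opt': "\<alpha> * (A + Lt + Gh) \<le> \<alpha> * (B + G0 - (\<mu>t i / 2 * N))"
    using opt step by (intro mult_left_mono) auto
  have CS': "\<alpha> * S \<le> \<alpha> * (norm d * norm (gF x0 - y \<nu> i))"
    using CS step by (intro mult_left_mono) auto
  have k2': "F (x0 + \<alpha> *\<^sub>R d) - ft i (x0 + \<alpha> *\<^sub>R d) x0 - \<alpha> * (S + Lt) + \<alpha>\<^sup>2 / 2 * (Dl i * N) \<le> F x0 - B"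
    using k2 by (simp add: \<psi>_def P0 B_def)
  have "U (xhalf \<nu> i) = F (x0 + \<alpha> *\<^sub>R d) + G (x0 + \<alpha> *\<^sub>R d)" by (simp add: xa U_def)
  also have "\<dots> \<le> F x0 + G0 - \<alpha> * ((1 - \<alpha> / 2) * \<mu>t i + \<alpha> / 2 * Dl i) * N
       + \<alpha> * norm d * norm (gF x0 - y \<nu> i)"
    using final_arith[OF k2' c6 c7 opt' CS'] by (simp add: mult.assoc)
  finally show "U (xhalf \<nu> i) \<le> U (x \<nu> i)
       - \<alpha> * ((1 - \<alpha> / 2) * \<mu>t i + \<alpha> / 2 * Dl i) * (norm (xhat \<nu> i - x \<nu> i))\<^sup>2
       + \<alpha> * norm (xhat \<nu> i - x \<nu> i) * norm (gF (x \<nu> i) - y \<nu> i)"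
    by (simp add: U_def x0_def xh_def d_def N_def G0_def)
qed

end
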